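(* Let $d>0$, let $\ell$ be a certified lower bound for $A^\top x\le u$ with certificate matrix $\Lambda$, and suppose $f(d,\ell)=1$. Let $i\in\arg\max_{h\in\{1,\dots,m\}}(a_h^\top y(d,\ell)-u_h)$, and define $\hat\lambda_i:=\gamma_i(d,\ell)Dt(d,\ell)-DA^\top B(d)^{-1}a_i$ and $\tilde\lambda_i:=\Lambda\hat\lambda_i^-+\hat\lambda_i^+$. If $\gamma_i(d,\ell)<\tau(A,u)$, then $\bar\lambda_i:=\tilde\lambda_i+e_i$ satisfies $A\bar\lambda_i=0$, $\bar\lambda_i\ge0$, $u^\top\bar\lambda_i<0$.
   Context: Standing assumption: $A=[a_1|\cdots|a_m]\in\mathbb{R}^{n\times m}$ has columns of unit Euclidean norm and $\{A\lambda:\lambda\ge0\}=\mathbb{R}^n$; $u\in\mathbb{R}^m$. $D=\mathrm{diag}(d)$; $r(\ell)=\tfrac12(u+\ell)$, $v(\ell)=\tfrac12(u-\ell)$, $B(d)=ADA^\top$, $y(d,\ell)=B(d)^{-1}ADr(\ell)$, $t(d,\ell)=A^\top y(d,\ell)-r(\ell)$, $f(d,\ell)=v(\ell)^\top Dv(\ell)-t(d,\ell)^\top Dt(d,\ell)$, $\gamma_i(d,\ell)=\sqrt{f(d,\ell)a_i^\top B(d)^{-1}a_i}$ when $f(d,\ell)>0$. $\ell$ is a certified lower bound with certificate matrix $\Lambda$ if $A\Lambda=-A$, $\Lambda\ge0$, $-\Lambda^\top u\ge\ell$. $\tau(A,u):=|z^*|$ with $z^*:=\max_{x}\min_{i}(u_i-a_i^\top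 x)$. $w^\pm$ are positive/negative parts. *)

theory Defs
  imports "HOL-Analysis.Analysis"
begin

text \<open>A is an n x m real matrix (type real^'m^'n); its columns a_i = column i A.
  Vectors in R^m have type real^'m, vectors in R^n type real^'n.\<close>

definition diagm :: "real^'m \<Rightarrow> real^'m^'m" where
  "diagm d = (\<chi> i j. if i = j then d $ i else 0)"

definition rvec :: "real^'m \<Rightarrow> real^'m \<Rightarrow> real^'m" where
  "rvec u l = (1/2) *\<^sub>R (u + l)"

definition vvec :: "real^'m \<Rightarrow> real^'m \<Rightarrow> real^'m" where
  "vvec u l = (1/2) *\<^sub>R (u - l)"

definition Bmat :: "real^'m^'n \<Rightarrow> real^'m \<Rightarrow> real^'n^'n" where
  "Bmat A d = A ** diagm d ** transpose A"

definition yvec :: "real^'m^'n \<Rightarrow> real^'m \<Rightarrow> real^'m \<Rightarrow> real^'m \<Rightarrow> real^'n" where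
  "yvec A u d l = matrix_inv (Bmat A d) *v ((A ** diagm d) *v rvec u l)"

definition tvec :: "real^'m^'n \<Rightarrow> real^'m \<Rightarrow> real^'m \<Rightarrow> real^'m \<Rightarrow> real^'m" where
  "tvec A u d l = transpose A *v yvec A u d l - rvec u l"

definition fval :: "real^'m^'n \<Rightarrow> real^'m \<Rightarrow> real^'m \<Rightarrow> real^'m \<Rightarrow> real" where
  "fval A u d l = vvec u l \<bullet> (diagm d *v vvec u l) - tvec A u d l \<bullet> (diagm d *v tvec A u d l)"

text \<open>gamma_i(d,l); only meaningful when fval > 0 (as in the paper).\<close>
definition gammai :: "real^'m^'n \<Rightarrow> real^'m \<Rightarrow> real^'m \<Rightarrow> real^'m \<Rightarrow> 'm \<Rightarrow> real" where
  "gammai A u d l i = sqrt (fval A u d l * (column i A \<bullet> (matrix_inv (Bmat A d) *v column i A)))"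

definition certified_lb :: "real^'m^'n \<Rightarrow> real^'m \<Rightarrow> real^'m \<Rightarrow> real^'m^'m \<Rightarrow> bool" where
  "certified_lb A u l Lam \<longleftrightarrow> A ** Lam = - A \<and> (\<forall>i j. Lam $ i $ j \<ge> 0)
     \<and> (\<forall>i. - ((transpose Lam *v u) $ i) \<ge> l $ i)"

definition zstar :: "real^'m^'n \<Rightarrow> real^'m \<Rightarrow> real" where
  "zstar A u = (SUP x. Min (range (\<lambda>i. u $ i - column i A \<bullet> x)))"

definition tau :: "real^'m^'n \<Rightarrow> real^'m \<Rightarrow> real" where
  "tau A u = \<bar>zstar A u\<bar>"

definition pospart :: "real^'m \<Rightarrow> real^'m" where
  "pospart w = (\<chi> j. max (w $ j) 0)"

definition negpart :: "real^'m \<Rightarrow> real^'m" where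
  "negpart w = (\<chi> j. max (- (w $ j)) 0)"

end

theory Submission
  imports Defs
begin

lemma tA_comp: "(transpose A *v z) $ j = column j A \<bullet> (z::real^'n)"
  by (simp add: matrix_vector_mult_def transpose_def column_def inner_vec_def mult.commute del: transpose_matrix_vector)

lemma diag_comp: "(diagm d *v x) $ j = d $ j * x $ j"
proof -
  have "(diagm d *v x) $ j = (\<Sum>k\<in>UNIV. (if j = k then d $ j else 0) * x $ k)"
    unfolding diagm_def matrix_vector_mult_def by simp
  also have "\<dots> = (\<Sum>k\<in>UNIV. if k = j then d $ j * x $ j else 0)"
    by (rule sum.cong) auto
  finally show ?thesis by simp
qed

lemma A_dot: "(A *v x) \<bullet> (z::real^'n) = (\<Sum>j\<in>UNIV. x $ j * (column j A \<bullet> z))"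
proof -
  have "(A *v x) \<bullet> z = (\<Sum>k\<in>UNIV. (\<Sum>j\<in>UNIV. A$k$j * x$j) * z$k)"
    unfolding inner_vec_def matrix_vector_mult_def by simp
  also have "\<dots> = (\<Sum>k\<in>UNIV. \<Sum>j\<in>UNIV. A$k$j * x$j * z$k)"
    by (simp add: sum_distrib_right)
  also have "\<dots> = (\<Sum>j\<in>UNIV. \<Sum>k\<in>UNIV. A$k$j * x$j * z$k)"
    by (rule sum.swap)
  also have "\<dots> = (\<Sum>j\<in>UNIV. x $ j * (column j A \<bullet> z))"
    unfolding inner_vec_def column_def by (simp add: sum_distrib_left mult_ac)
  finally show ?thesis .
qed

lemma B_mv: "Bmat A d *v z = A *v (diagm d *v (transpose A *v z))"
  unfolding Bmat_def by (simp only: matrix_vector_mul_assoc matrix_mul_assoc)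

lemma B_dot: "(Bmat A d *v z) \<bullet> w = (\<Sum>j\<in>UNIV. d $ j * (column j A \<bullet> z) * (column j A \<bullet> w))"
  unfolding B_mv A_dot by (simp add: diag_comp tA_comp del: transpose_matrix_vector)

lemma dot_sum: "x \<bullet> (z::real^'m) = (\<Sum>j\<in>UNIV. x $ j * z $ j)"
  by (simp add: inner_vec_def)

lemma Lam_dot: "(Lam *v x) \<bullet> (z::real^'m) = x \<bullet> (transpose Lam *v z)"
  by (metis dot_lmul_matrix transpose_matrix_vector inner_commute)

lemma amgm: "(c::real) > 0 \<Longrightarrow> 2*a*b \<le> c*a^2 + b^2/c"
proof -
  assume c: "c > 0"
  have "0 \<le> (c*a - b)^2/c" using c by simp
  also have "(c*a - b)^2/c = c*a^2 + b^2/c - 2*a*b"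
    using c by (simp add: field_simps power2_eq_square)
  finally show ?thesis by simp
qed

lemma B_inv:
  fixes A :: "real^'m^'n"
  assumes pos_span: "{A *v lam | lam. \<forall>k. lam $ k \<ge> 0} = UNIV"
    and d_pos: "\<forall>k. d $ k > 0"
  shows "Bmat A d ** matrix_inv (Bmat A d) = mat 1 \<and> matrix_inv (Bmat A d) ** Bmat A d = mat 1"
proof -
  have "\<forall>z. Bmat A d *v z = 0 \<longrightarrow> z = 0"
  proof (intro allI impI)
    fix z assume Bz: "Bmat A d *v z = 0"
    have "0 = (Bmat A d *v z) \<bullet> z" using Bz by simp
    also have "\<dots> = (\<Sum>j\<in>UNIV. d $ j * (column j A \<bullet> z)^2)"
      unfolding B_dot by (simp add: power2_eq_square mult_ac)
    finally have "(\<Sum>j\<in>UNIV. d $ j * (column j A \<bullet> z)^2) = 0" by simp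
    moreover have "\<forall>j\<in>UNIV. 0 \<le> d $ j * (column j A \<bullet> z)^2"
      using d_pos by (simp add: less_imp_le)
    ultimately have "\<forall>j\<in>UNIV. d $ j * (column j A \<bullet> z)^2 = 0"
      using sum_nonneg_eq_0_iff[OF finite, of UNIV "\<lambda>j. d $ j * (column j A \<bullet> z)^2"] by blast
    hence az: "\<forall>j. column j A \<bullet> z = 0"
    proof (intro allI)
      fix j assume h: "\<forall>j\<in>UNIV. d $ j * (column j A \<bullet> z)^2 = 0"
      have "d $ j \<noteq> 0" using d_pos by (metis less_irrefl)
      thus "column j A \<bullet> z = 0" using h by (metis UNIV_I mult_eq_0_iff power_eq_0_iff)
    qed
    have "z \<in> {A *v lam | lam. \<forall>k. lam $ k \<ge> 0}" using pos_span by simp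
    then obtain lam where "z = A *v lam" by blast
    hence "z \<bullet> z = (\<Sum>j\<in>UNIV. lam $ j * (column j A \<bullet> z))" using A_dot by metis
    also have "\<dots> = 0" using az by simp
    finally show "z = 0" by simp
  qed
  hence "\<exists>B'. B' ** Bmat A d = mat 1" using matrix_left_invertible_ker by blast
  hence "invertible (Bmat A d)" using invertible_left_inverse by blast
  hence "\<exists>A'. Bmat A d ** A' = mat 1 \<and> A' ** Bmat A d = mat 1" unfolding invertible_def .
  thus ?thesis unfolding matrix_inv_def by (rule someI_ex)
qed

theorem proposition4:
  fixes A :: "real^'m^'n" and u d l :: "real^'m" and Lam :: "real^'m^'m" and i :: 'm
  assumes unit_cols: "\<forall>k. norm (column k A) = 1"
    and pos_span: "{A *v lam | lam. \<forall>k. lam $ k \<ge> 0} = UNIV"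
    and d_pos: "\<forall>k. d $ k > 0"
    and cert: "certified_lb A u l Lam"
    and f_one: "fval A u d l = 1"
    and i_argmax: "\<forall>h. column h A \<bullet> yvec A u d l - u $ h \<le> column i A \<bullet> yvec A u d l - u $ i"
    and gamma_lt: "gammai A u d l i < tau A u"
  shows "let lhat = gammai A u d l i *\<^sub>R (diagm d *v tvec A u d l)
                     - (diagm d ** transpose A) *v (matrix_inv (Bmat A d) *v column i A);
             ltil = Lam *v negpart lhat + pospart lhat;
             lbar = ltil + axis i 1
         in A *v lbar = 0 \<and> (\<forall>k. lbar $ k \<ge> 0) \<and> u \<bullet> lbar < 0"
proof -
  define a where "a = (\<lambda>h. column h A)"
  define B where "B = Bmat A d"
  define Bi where "Bi = matrix_inv (Bmat A d)"
  define D where "D = diagm d"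
  define y where "y = yvec A u d l"
  define t where "t = tvec A u d l"
  define r where "r = rvec u l"
  define v where "v = vvec u l"
  define w where "w = Bi *v a i"
  define s where "s = (\<lambda>j. a j \<bullet> w)"
  define g where "g = a i \<bullet> w"
  define \<gamma> where "\<gamma> = gammai A u d l i"
  define lh where "lh = \<gamma> *\<^sub>R (D *v t) - (D ** transpose A) *v w"
  define ng where "ng = negpart lh"
  define ps where "ps = pospart lh"
  define lbar where "lbar = Lam *v ng + ps + axis i 1"
  have dnn: "\<And>j. d $ j \<ge> 0" using d_pos less_imp_le by blast
  have BBi: "B ** Bi = mat 1" and BiB: "Bi ** B = mat 1"
    using B_inv[OF pos_span d_pos] unfolding B_def Bi_def by auto
  have BB: "\<And>z. B *v (Bi *v z) = z"
    by (simp add: BBi matrix_vector_mul_assoc)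
  have Bw: "B *v w = a i" unfolding w_def by (rule BB)
  have ADr: "(A ** D) *v r = A *v (D *v r)" by (simp add: matrix_vector_mul_assoc)
  have By: "B *v y = A *v (D *v r)"
    unfolding y_def yvec_def Bi_def[symmetric] B_def[symmetric] D_def[symmetric] r_def[symmetric] ADr
    by (rule BB[unfolded Bi_def B_def[symmetric]])
  have t_comp: "\<And>j. t $ j = a j \<bullet> y - r $ j"
    unfolding t_def tvec_def y_def[symmetric] r_def[symmetric] a_def
    by (simp only: vector_minus_component tA_comp)
  have ADt: "A *v (D *v t) = 0"
  proof -
    have "t = transpose A *v y - r" unfolding t_def tvec_def y_def r_def ..
    hence "A *v (D *v t) = B *v y - A *v (D *v r)"
      unfolding B_def B_mv D_def by (simp only: matrix_vector_mult_diff_distrib)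
    thus ?thesis using By by simp
  qed
  have orth: "\<And>z. (\<Sum>j\<in>UNIV. d $ j * t $ j * (a j \<bullet> z)) = 0"
  proof -
    fix z
    have "(A *v (D *v t)) \<bullet> z = 0" using ADt by simp
    thus "(\<Sum>j\<in>UNIV. d $ j * t $ j * (a j \<bullet> z)) = 0"
      unfolding A_dot D_def diag_comp a_def by (simp add: mult_ac)
  qed
  have BdotB: "\<And>z z'. (B *v z) \<bullet> z' = (\<Sum>j\<in>UNIV. d $ j * (a j \<bullet> z) * (a j \<bullet> z'))"
    unfolding B_def a_def by (rule B_dot)
  have S2: "(\<Sum>j\<in>UNIV. d $ j * r $ j * s j) = a i \<bullet> y"
  proof -
    have "(\<Sum>j\<in>UNIV. d $ j * r $ j * s j) = (A *v (D *v r)) \<bullet> w"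
      unfolding A_dot D_def diag_comp s_def a_def by (simp add: mult_ac)
    also have "\<dots> = (B *v y) \<bullet> w" using By by simp
    also have "\<dots> = (B *v w) \<bullet> y" unfolding BdotB by (simp add: mult_ac)
    finally show ?thesis using Bw by simp
  qed
  have G: "g = (\<Sum>j\<in>UNIV. d $ j * (s j)^2)"
  proof -
    have "g = (B *v w) \<bullet> w" unfolding g_def Bw ..
    thus ?thesis unfolding BdotB s_def by (simp add: power2_eq_square mult_ac)
  qed
  have g_pos: "g > 0"
  proof -
    have g0: "g \<ge> 0" unfolding G by (intro sum_nonneg) (simp add: dnn)
    have "a i \<bullet> a i = 1" using unit_cols unfolding a_def
      by (metis power2_norm_eq_inner power_one)
    hence "(B *v w) \<bullet> a i = 1" using Bw by simp
    hence ne: "(\<Sum>j\<in>UNIV. d $ j * s j * (a j \<bullet> a i)) \<noteq> 0" unfolding BdotB s_def by simp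
    have "g \<noteq> 0"
    proof
      assume "g = 0"
      hence "\<forall>j\<in>UNIV. d $ j * (s j)^2 = 0" unfolding G
        using sum_nonneg_eq_0_iff[OF finite, of UNIV "\<lambda>j. d $ j * (s j)^2"] dnn by simp
      hence "\<forall>j. s j = 0" using d_pos by (metis UNIV_I less_irrefl mult_eq_0_iff power_eq_0_iff)
      thus False using ne by simp
    qed
    thus ?thesis using g0 by simp
  qed
  have gam: "\<gamma> = sqrt g" unfolding \<gamma>_def gammai_def f_one g_def a_def w_def Bi_def by simp
  have gam_pos: "\<gamma> > 0" using gam g_pos by simp
  have gam2: "\<gamma>^2 = g" using gam g_pos by simp
  have lh_comp: "\<And>j. lh $ j = d $ j * (\<gamma> * t $ j - s j)"
  proof -
    fix j
    have "(D ** transpose A) *v w = D *v (transpose A *v w)" by (simp only: matrix_vector_mul_assoc)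
    hence "lh $ j = \<gamma> * (d $ j * t $ j) - d $ j * s j"
      unfolding lh_def D_def s_def a_def by (simp add: diag_comp tA_comp del: transpose_matrix_vector)
    thus "lh $ j = d $ j * (\<gamma> * t $ j - s j)" by (simp add: algebra_simps)
  qed
  define V where "V = (\<Sum>j\<in>UNIV. d $ j * (v $ j)^2)"
  define T where "T = (\<Sum>j\<in>UNIV. d $ j * (t $ j)^2)"
  have VT: "V = T + 1"
  proof -
    have "fval A u d l = V - T"
      unfolding fval_def V_def T_def v_def[symmetric] t_def[symmetric] dot_sum diag_comp
      by (simp add: power2_eq_square mult_ac)
    thus ?thesis using f_one by simp
  qed
  have cert': "A ** Lam = - A" "\<And>i j. Lam $ i $ j \<ge> 0" "\<And>i. - ((transpose Lam *v u) $ i) \<ge> l $ i"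
    using cert unfolding certified_lb_def by auto
  have ng_nn: "\<And>j. ng $ j \<ge> 0" and ps_nn: "\<And>j. ps $ j \<ge> 0"
    unfolding ng_def ps_def negpart_def pospart_def by auto
  have psng: "ps - ng = lh" unfolding ps_def ng_def pospart_def negpart_def
    by (simp add: vec_eq_iff max_def)
  have part1: "A *v lbar = 0"
  proof -
    have e1: "A *v ((D ** transpose A) *v w) = B *v w"
      unfolding B_def Bmat_def D_def by (simp only: matrix_vector_mul_assoc matrix_mul_assoc)
    have "A *v lh = \<gamma> *\<^sub>R (A *v (D *v t)) - A *v ((D ** transpose A) *v w)"
      unfolding lh_def by (simp only: matrix_vector_mult_diff_distrib matrix_vector_mult_scaleR)
    hence Alh: "A *v lh = - a i" using ADt e1 Bw by simp
    have "A *v (Lam *v ng) = (- A) *v ng" by (simp only: matrix_vector_mul_assoc cert'(1))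
    also have "\<dots> = - (A *v ng)" by (simp add: matrix_vector_mult_def sum_negf vec_eq_iff)
    finally have e2: "A *v (Lam *v ng) = - (A *v ng)" .
    have "A *v lbar = A *v (Lam *v ng) + A *v ps + A *v axis i 1"
      unfolding lbar_def by (simp only: matrix_vector_right_distrib)
    also have "\<dots> = A *v (ps - ng) + a i"
      unfolding e2 matrix_vector_mult_basis a_def by (simp add: matrix_vector_mult_diff_distrib)
    finally show ?thesis using Alh psng by simp
  qed
  have part2: "\<forall>k. lbar $ k \<ge> 0"
  proof
    fix k
    have "(Lam *v ng) $ k \<ge> 0" unfolding matrix_vector_mult_def
      using cert'(2) ng_nn by (simp add: sum_nonneg)
    moreover have "axis i (1::real) $ k \<ge> 0" by (simp add: axis_def)
    ultimately show "lbar $ k \<ge> 0" unfolding lbar_def using ps_nn[of k] by simp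
  qed
  have u_comp: "\<And>j. u $ j = r $ j + v $ j" and l_comp: "\<And>j. l $ j = r $ j - v $ j"
    unfolding r_def v_def rvec_def vvec_def by (simp_all add: field_simps)
  have step1: "u \<bullet> lbar \<le> (\<Sum>j\<in>UNIV. u $ j * ps $ j - l $ j * ng $ j) + u $ i"
  proof -
    have "u \<bullet> (Lam *v ng) = ng \<bullet> (transpose Lam *v u)"
      by (simp only: inner_commute[of u] Lam_dot)
    also have "\<dots> = (\<Sum>j\<in>UNIV. ng $ j * (transpose Lam *v u) $ j)" by (rule dot_sum)
    also have "\<dots> \<le> (\<Sum>j\<in>UNIV. ng $ j * (- l $ j))"
    proof (intro sum_mono mult_left_mono)
      fix j
      show "(transpose Lam *v u) $ j \<le> - l $ j" using cert'(3)[of j] by linarith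
      show "0 \<le> ng $ j" by (rule ng_nn)
    qed
    finally have "u \<bullet> (Lam *v ng) \<le> (\<Sum>j\<in>UNIV. ng $ j * (- l $ j))" .
    moreover have "u \<bullet> lbar = u \<bullet> (Lam *v ng) + (\<Sum>j\<in>UNIV. u $ j * ps $ j) + u $ i"
      unfolding lbar_def inner_add_right inner_axis dot_sum[of u ps] by simp
    ultimately show ?thesis by (simp add: sum_subtractf sum_negf mult_ac)
  qed
  have step2: "\<And>j. u $ j * ps $ j - l $ j * ng $ j \<le> r $ j * lh $ j
      + (\<gamma> * d $ j * (v $ j)^2 + d $ j * (\<gamma> * t $ j - s j)^2 / \<gamma>) / 2"
  proof -
    fix j
    have e: "u $ j * ps $ j - l $ j * ng $ j = r $ j * lh $ j + v $ j * \<bar>lh $ j\<bar>"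
      unfolding ps_def ng_def pospart_def negpart_def u_comp l_comp
      by (cases "lh $ j \<ge> 0") (auto simp: algebra_simps)
    have "v $ j * \<bar>lh $ j\<bar> \<le> \<bar>v $ j\<bar> * \<bar>lh $ j\<bar>" by (simp add: mult_right_mono)
    also have "2 * (\<bar>v $ j\<bar> * \<bar>lh $ j\<bar>) \<le> (\<gamma> * d $ j) * \<bar>v $ j\<bar>^2 + \<bar>lh $ j\<bar>^2 / (\<gamma> * d $ j)"
      using amgm[of "\<gamma> * d $ j" "\<bar>v $ j\<bar>" "\<bar>lh $ j\<bar>"] gam_pos d_pos by (simp add: mult_ac)
    also have "\<bar>lh $ j\<bar>^2 / (\<gamma> * d $ j) = d $ j * (\<gamma> * t $ j - s j)^2 / \<gamma>"
      unfolding lh_comp using gam_pos d_pos[rule_format, of j]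
      by (simp add: power2_eq_square field_simps)
    finally show "u $ j * ps $ j - l $ j * ng $ j \<le> r $ j * lh $ j
      + (\<gamma> * d $ j * (v $ j)^2 + d $ j * (\<gamma> * t $ j - s j)^2 / \<gamma>) / 2"
      unfolding e by (simp add: power2_abs mult_ac)
  qed
  have Str: "(\<Sum>j\<in>UNIV. d $ j * t $ j * r $ j) = - T"
  proof -
    have "(\<Sum>j\<in>UNIV. d $ j * t $ j * r $ j) = (\<Sum>j\<in>UNIV. d $ j * t $ j * (a j \<bullet> y) - d $ j * (t $ j)^2)"
      by (rule sum.cong) (auto simp: t_comp algebra_simps power2_eq_square)
    also have "\<dots> = - T" unfolding sum_subtractf orth T_def by simp
    finally show ?thesis .
  qed
  have Sts: "(\<Sum>j\<in>UNIV. d $ j * t $ j * s j) = 0" unfolding s_def by (rule orth)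
  define F where "F = (\<lambda>j. r $ j * lh $ j
      + (\<gamma> * d $ j * (v $ j)^2 + d $ j * (\<gamma> * t $ j - s j)^2 / \<gamma>) / 2)"
  have pw: "\<And>j. F j = \<gamma> * (d $ j * t $ j * r $ j) - d $ j * r $ j * s j + (\<gamma>/2) * (d $ j * (v $ j)^2)
     + (\<gamma>/2) * (d $ j * (t $ j)^2) - d $ j * t $ j * s j + (d $ j * (s j)^2) / (2*\<gamma>)"
    unfolding F_def lh_comp using gam_pos by (simp add: field_simps power2_eq_square)
  have step3: "(\<Sum>j\<in>UNIV. F j) = \<gamma> - a i \<bullet> y"
  proof -
    have "(\<Sum>j\<in>UNIV. F j) = \<gamma> * (\<Sum>j\<in>UNIV. d $ j * t $ j * r $ j) - (\<Sum>j\<in>UNIV. d $ j * r $ j * s j)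
       + (\<gamma>/2) * V + (\<gamma>/2) * T - (\<Sum>j\<in>UNIV. d $ j * t $ j * s j) + g / (2*\<gamma>)"
      unfolding pw V_def T_def G
      by (simp add: sum.distrib sum_subtractf sum_distrib_left sum_divide_distrib)
    also have "\<dots> = \<gamma> - a i \<bullet> y" unfolding Str S2 Sts VT gam2[symmetric]
      using gam_pos by (simp add: field_simps power2_eq_square)
    finally show ?thesis .
  qed
  have ubound: "u \<bullet> lbar \<le> \<gamma> - (a i \<bullet> y - u $ i)"
  proof -
    have "(\<Sum>j\<in>UNIV. u $ j * ps $ j - l $ j * ng $ j) \<le> (\<Sum>j\<in>UNIV. F j)"
      unfolding F_def by (rule sum_mono) (rule step2)
    thus ?thesis using step1 step3 by simp
  qed
  have aa: "\<And>h. a h \<bullet> a h = 1" using unit_cols unfolding a_def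
    by (metis power2_norm_eq_inner power_one)
  have ahai: "\<And>h x. a h \<bullet> x \<le> norm x" using unit_cols unfolding a_def
    by (metis mult_1 norm_cauchy_schwarz)
  define E where "E = (\<lambda>z. \<Sum>j\<in>UNIV. d $ j * (a j \<bullet> z)^2)"
  have colLam: "\<And>h p. - (a h \<bullet> p) = (\<Sum>k\<in>UNIV. Lam $ k $ h * (a k \<bullet> p))"
  proof -
    fix h p
    have "(A ** Lam) *v axis h 1 = - (a h)"
      unfolding cert'(1) by (simp add: matrix_vector_mult_def sum_negf vec_eq_iff a_def
         matrix_vector_mult_basis[symmetric] del: matrix_vector_mult_basis)
    hence "- (a h) = A *v (Lam *v axis h 1)" by (simp only: matrix_vector_mul_assoc)
    hence "- (a h \<bullet> p) = (A *v (Lam *v axis h 1)) \<bullet> p" by (metis inner_minus_left)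
    also have "\<dots> = (\<Sum>k\<in>UNIV. Lam $ k $ h * (a k \<bullet> p))"
      unfolding A_dot matrix_vector_mult_basis a_def by (simp add: column_def)
    finally show "- (a h \<bullet> p) = (\<Sum>k\<in>UNIV. Lam $ k $ h * (a k \<bullet> p))" .
  qed
  have feas: "\<And>p. (\<forall>h. a h \<bullet> p \<le> u $ h) \<Longrightarrow> E (p - y) \<le> 1"
  proof -
    fix p assume fp: "\<forall>h. a h \<bullet> p \<le> u $ h"
    have lo: "\<And>h. l $ h \<le> a h \<bullet> p"
    proof -
      fix h
      have "- (a h \<bullet> p) \<le> (\<Sum>k\<in>UNIV. Lam $ k $ h * u $ k)"
        unfolding colLam by (intro sum_mono mult_left_mono) (use fp cert'(2) in auto)
      also have "\<dots> = (transpose Lam *v u) $ h"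
        by (simp add: tA_comp column_def inner_vec_def mult_ac del: transpose_matrix_vector)
      finally show "l $ h \<le> a h \<bullet> p" using cert'(3)[of h] by linarith
    qed
    have sq: "\<And>j. (a j \<bullet> p - r $ j)^2 \<le> (v $ j)^2"
    proof -
      fix j
      have "(a j \<bullet> p - r $ j)^2 - (v $ j)^2 = (a j \<bullet> p - u $ j) * (a j \<bullet> p - l $ j)"
        unfolding u_comp l_comp by (simp add: algebra_simps power2_eq_square)
      also have "\<dots> \<le> 0" using fp lo[of j] by (intro mult_nonpos_nonneg) auto
      finally show "(a j \<bullet> p - r $ j)^2 \<le> (v $ j)^2" by simp
    qed
    have "(\<Sum>j\<in>UNIV. d $ j * (a j \<bullet> p - r $ j)^2) \<le> V"
      unfolding V_def by (intro sum_mono mult_left_mono sq dnn)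
    moreover have "(\<Sum>j\<in>UNIV. d $ j * (a j \<bullet> p - r $ j)^2)
        = E (p - y) + 2 * (\<Sum>j\<in>UNIV. d $ j * t $ j * (a j \<bullet> (p - y))) + T"
    proof -
      have "\<And>j. d $ j * (a j \<bullet> p - r $ j)^2 = d $ j * (a j \<bullet> (p - y))^2 + 2 * (d $ j * t $ j * (a j \<bullet> (p - y))) + d $ j * (t $ j)^2"
        by (simp add: t_comp inner_diff_right algebra_simps power2_eq_square)
      thus ?thesis unfolding E_def T_def by (simp add: sum.distrib sum_distrib_left)
    qed
    ultimately show "E (p - y) \<le> 1" using orth[of "p - y"] VT by simp
  qed
  have wid: "\<And>z. E z \<le> 1 \<Longrightarrow> a i \<bullet> z \<le> \<gamma>"
  proof -
    fix z assume Ez: "E z \<le> 1"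
    have "a i \<bullet> z = (\<Sum>j\<in>UNIV. d $ j * s j * (a j \<bullet> z))"
      unfolding Bw[symmetric] BdotB s_def ..
    hence "2 * (a i \<bullet> z) = (\<Sum>j\<in>UNIV. d $ j * (2 * (a j \<bullet> z) * s j))"
      by (simp add: sum_distrib_left mult_ac)
    also have "\<dots> \<le> (\<Sum>j\<in>UNIV. d $ j * (\<gamma> * (a j \<bullet> z)^2 + (s j)^2 / \<gamma>))"
      by (intro sum_mono mult_left_mono amgm gam_pos dnn)
    also have "\<dots> = \<gamma> * E z + g / \<gamma>"
      unfolding E_def G by (simp add: sum.distrib sum_distrib_left sum_divide_distrib algebra_simps)
    also have "\<dots> \<le> \<gamma> * 1 + \<gamma>"
    proof -
      have "g / \<gamma> = \<gamma>" using gam2 gam_pos by (simp add: power2_eq_square field_simps)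
      moreover have "\<gamma> * E z \<le> \<gamma> * 1" using Ez gam_pos by (intro mult_left_mono) auto
      ultimately show ?thesis by simp
    qed
    finally show "a i \<bullet> z \<le> \<gamma>" by simp
  qed
  define fx where "fx = (\<lambda>x. Min (range (\<lambda>h. u $ h - a h \<bullet> x)))"
  have zs: "zstar A u = (SUP x. fx x)" unfolding zstar_def fx_def a_def ..
  have fx_le: "\<And>x h. fx x \<le> u $ h - a h \<bullet> x" unfolding fx_def by (rule Min_le) auto
  have bdd: "bdd_above (range fx)"
  proof (rule bdd_aboveI2)
    fix x
    obtain k where k: "a k \<bullet> x \<ge> 0"
    proof (rule ccontr)
      assume "\<not> thesis"
      hence neg: "\<forall>k. a k \<bullet> x < 0" using that by (meson not_le)
      have "x \<in> {A *v lam | lam. \<forall>k. lam $ k \<ge> 0}" using pos_span by simp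
      then obtain lam where lam: "x = A *v lam" "\<forall>k. lam $ k \<ge> 0" by blast
      have "x \<bullet> x = (\<Sum>j\<in>UNIV. lam $ j * (a j \<bullet> x))" unfolding a_def using lam(1) A_dot by metis
      also have "\<dots> \<le> 0" using lam(2) neg by (intro sum_nonpos mult_nonneg_nonpos) (auto simp: less_imp_le)
      finally have "x = 0" using inner_gt_zero_iff[of x] by (meson not_le)
      thus False using neg by simp
    qed
    have "fx x \<le> u $ k - a k \<bullet> x" by (rule fx_le)
    also have "\<dots> \<le> \<bar>u $ k\<bar>" using k by simp
    also have "\<dots> \<le> (\<Sum>j\<in>UNIV. \<bar>u $ j\<bar>)" by (rule member_le_sum) auto
    finally show "fx x \<le> (\<Sum>j\<in>UNIV. \<bar>u $ j\<bar>)" .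
  qed
  have fy: "fx y = u $ i - a i \<bullet> y"
    unfolding fx_def
  proof (rule Min_eqI)
    show "finite (range (\<lambda>h. u $ h - a h \<bullet> y))" by simp
    show "u $ i - a i \<bullet> y \<in> range (\<lambda>h. u $ h - a h \<bullet> y)" by simp
    fix z assume "z \<in> range (\<lambda>h. u $ h - a h \<bullet> y)"
    then obtain h where "z = u $ h - a h \<bullet> y" by blast
    moreover have "a h \<bullet> y - u $ h \<le> a i \<bullet> y - u $ i" using i_argmax unfolding a_def y_def by blast
    ultimately show "u $ i - a i \<bullet> y \<le> z" by linarith
  qed
  have Mgt: "\<gamma> < a i \<bullet> y - u $ i"
  proof (cases "zstar A u \<le> 0")
    case True
    have "fx y \<le> zstar A u" unfolding zs by (rule cSUP_upper[OF _ bdd]) simp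
    moreover have "\<gamma> < - zstar A u" using gamma_lt True unfolding \<gamma>_def tau_def by simp
    ultimately show ?thesis using fy by simp
  next
    case False
    hence "\<gamma> < (SUP x. fx x)" using gamma_lt unfolding \<gamma>_def tau_def zs by simp
    then obtain x where x: "\<gamma> < fx x" using less_cSUP_iff[OF _ bdd] by blast
    define \<rho> where "\<rho> = fx x"
    have rho: "\<gamma> < \<rho>" "\<rho> \<ge> 0" using x gam_pos unfolding \<rho>_def by auto
    define p1 where "p1 = x + \<rho> *\<^sub>R a i"
    define p2 where "p2 = x - \<rho> *\<^sub>R a i"
    have f1: "\<forall>h. a h \<bullet> p1 \<le> u $ h"
    proof
      fix h
      have "a h \<bullet> p1 = a h \<bullet> x + \<rho> * (a h \<bullet> a i)" unfolding p1_def by (simp add: inner_add_right)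
      also have "\<dots> \<le> a h \<bullet> x + \<rho> * 1"
        using ahai[of h "a i"] unit_cols rho(2) unfolding a_def by (intro add_left_mono mult_left_mono) auto
      also have "\<dots> \<le> u $ h" using fx_le[of x h] unfolding \<rho>_def by simp
      finally show "a h \<bullet> p1 \<le> u $ h" .
    qed
    have f2: "\<forall>h. a h \<bullet> p2 \<le> u $ h"
    proof
      fix h
      have "a h \<bullet> p2 = a h \<bullet> x + \<rho> * (a h \<bullet> (- a i))" unfolding p2_def by (simp add: inner_diff_right)
      also have "\<dots> \<le> a h \<bullet> x + \<rho> * 1"
        using ahai[of h "- a i"] unit_cols rho(2) unfolding a_def by (intro add_left_mono mult_left_mono) auto
      also have "\<dots> \<le> u $ h" using fx_le[of x h] unfolding \<rho>_def by simp
      finally show "a h \<bullet> p2 \<le> u $ h" .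
    qed
    have w1: "a i \<bullet> (p1 - y) \<le> \<gamma>" using wid feas f1 by blast
    have "E (y - p2) = E (p2 - y)" unfolding E_def
    proof (rule sum.cong)
      fix j
      have "a j \<bullet> (y - p2) = - (a j \<bullet> (p2 - y))" by (simp add: inner_diff_right)
      thus "d $ j * (a j \<bullet> (y - p2))^2 = d $ j * (a j \<bullet> (p2 - y))^2" by simp
    qed simp
    hence w2: "a i \<bullet> (y - p2) \<le> \<gamma>" using wid feas f2 by simp
    have "a i \<bullet> (p1 - y) + a i \<bullet> (y - p2) = 2 * \<rho>"
      unfolding p1_def p2_def by (simp add: inner_diff_right inner_add_right aa)
    hence "2 * \<rho> \<le> 2 * \<gamma>" using w1 w2 by simp
    thus ?thesis using rho by simp
  qed
  have lh_eq: "gammai A u d l i *\<^sub>R (diagm d *v tvec A u d l)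
                     - (diagm d ** transpose A) *v (matrix_inv (Bmat A d) *v column i A) = lh"
    unfolding lh_def \<gamma>_def D_def t_def w_def Bi_def a_def ..
  have "A *v lbar = 0 \<and> (\<forall>k. lbar $ k \<ge> 0) \<and> u \<bullet> lbar < 0"
    using part1 part2 ubound Mgt by simp
  thus ?thesis unfolding Let_def lh_eq lbar_def ng_def ps_def .
qed

end
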